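(* Let $\overrightarrow{W}$ and $\overrightarrow{W}'$ be two Morse sequences on the same simplicial complex $K$, with reference maps $\curlywedge,\curlywedge'$ and coreference maps $\curlyvee,\curlyvee'$ respectively. If $\overrightarrow{W}$ and $\overrightarrow{W}'$ are equivalent, then $\curlywedge=\curlywedge'$ and $\curlyvee=\curlyvee'$.
   Context: A simplicial complex $K$ is a finite collection of non-empty finite sets closed under taking non-empty subsets; $\dim\sigma=|\sigma|-1$, $K^{(p)}$ the set of $p$-simplices. A pair $(\sigma,\tau)$ with $\sigma\subsetneq\tau$ is a free pair for $K$ if $\tau$ is the only simplex other than $\sigma$ containing $\sigma$; $K$ is then an elementary expansion of $K\setminus\{\sigma,\tau\}$. If $\nu$ is a facet (maximal simplex) of $K$, $K$ is an elementary filling of $K\setminus\{\nu\}$. A Morse sequence on $K$ is a sequence $\langle\emptyset=K_0,\dots,K_k=K\rangle$ with each $K_i$ an elementary expansion or filling of $K_{i-1}$; simplices added by fillings are critical; for an expansion $K_i=K_{i-1}\cup\{\sigma,\tau\}$, $\sigma\subset\tau$, $(\sigma,\tau)$ is a regular pair, $\sigma$ lower regular, $\tau$ upper regular. The gradient vector field of a Morse sequence is the set of its regular pairs; two Morse sequences on $K$ are equivalent if they have the same gradient vector field. $K[p]$ is the $\mathbb{Z}_2$-vector space of subsets of $K^{(p)}$ (sum = symmetric difference, $0=\emptyset$); $\partial(\sigma)=\{\tau\in K^{(p-1)}:\tau\subset\sigma\}$, $\delta(\sigma)=\{\tau\in K^{(p+1)}:\sigma\subset\tau\}$. The reference map $\curlywedge$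 of a Morse sequence is the unique map assigning to each $p$-simplex a set of critical $p$-simplices, extended linearly (mod 2) to chains, with $\curlywedge(\nu)=\{\nu\}$ for critical $\nu$ and $\curlywedge(\tau)=0=\curlywedge(\partial(\tau))$ for upper regular $\tau$; the coreference map $\curlyvee$ is the unique such map with $\curlyvee(\nu)=\{\nu\}$ for critical $\nu$ and $\curlyvee(\sigma)=0=\curlyvee(\delta(\sigma))$ for lower regular $\sigma$. *)

theory Defs
  imports Main
begin

text \<open>Simplices are finite non-empty sets of vertices of type 'a; a complex is a
  set of simplices. A p-simplex has cardinality p+1.\<close>

definition simplicial_complex :: "'a set set \<Rightarrow> bool" where
  "simplicial_complex K \<longleftrightarrow> finite K \<and>
     (\<forall>\<sigma>\<in>K. \<sigma> \<noteq> {} \<and> finite \<sigma>) \<and>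
     (\<forall>\<sigma>\<in>K. \<forall>\<tau>. \<tau> \<subseteq> \<sigma> \<and> \<tau> \<noteq> {} \<longrightarrow> \<tau> \<in> K)"

definition free_pair :: "'a set set \<Rightarrow> 'a set \<Rightarrow> 'a set \<Rightarrow> bool" where
  "free_pair K \<sigma> \<tau> \<longleftrightarrow> \<sigma> \<in> K \<and> \<tau> \<in> K \<and> \<sigma> \<subset> \<tau> \<and>
     (\<forall>\<nu>\<in>K. \<sigma> \<subseteq> \<nu> \<longrightarrow> \<nu> = \<sigma> \<or> \<nu> = \<tau>)"

definition facet :: "'a set set \<Rightarrow> 'a set \<Rightarrow> bool" where
  "facet K \<nu> \<longleftrightarrow> \<nu> \<in> K \<and> (\<forall>\<mu>\<in>K. \<nu> \<subseteq> \<mu> \<longrightarrow> \<mu> = \<nu>)"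

definition expansion_by :: "'a set set \<Rightarrow> 'a set set \<Rightarrow> 'a set \<Rightarrow> 'a set \<Rightarrow> bool" where
  "expansion_by L K \<sigma> \<tau> \<longleftrightarrow> free_pair K \<sigma> \<tau> \<and> L = K - {\<sigma>, \<tau>}"

definition filling_by :: "'a set set \<Rightarrow> 'a set set \<Rightarrow> 'a set \<Rightarrow> bool" where
  "filling_by L K \<nu> \<longleftrightarrow> facet K \<nu> \<and> L = K - {\<nu>}"

definition morse_seq :: "'a set set \<Rightarrow> 'a set set list \<Rightarrow> bool" where
  "morse_seq K W \<longleftrightarrow> simplicial_complex K \<and> W \<noteq> [] \<and> hd W = {} \<and> last W = K \<and>
     (\<forall>i < length W. simplicial_complex (W ! i)) \<and>
     (\<forall>i. Suc i < length W \<longrightarrow>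
        (\<exists>\<sigma> \<tau>. expansion_by (W ! i) (W ! Suc i) \<sigma> \<tau>) \<or>
        (\<exists>\<nu>. filling_by (W ! i) (W ! Suc i) \<nu>))"

definition gradient :: "'a set set list \<Rightarrow> ('a set \<times> 'a set) set" where
  "gradient W = {(\<sigma>, \<tau>). \<exists>i. Suc i < length W \<and> expansion_by (W ! i) (W ! Suc i) \<sigma> \<tau>}"

definition critical :: "'a set set list \<Rightarrow> 'a set set" where
  "critical W = {\<nu>. \<exists>i. Suc i < length W \<and> filling_by (W ! i) (W ! Suc i) \<nu>}"

definition upper_regular :: "'a set set list \<Rightarrow> 'a set \<Rightarrow> bool" where
  "upper_regular W \<tau> \<longleftrightarrow> (\<exists>\<sigma>. (\<sigma>, \<tau>) \<in> gradient W)"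

definition lower_regular :: "'a set set list \<Rightarrow> 'a set \<Rightarrow> bool" where
  "lower_regular W \<sigma> \<longleftrightarrow> (\<exists>\<tau>. (\<sigma>, \<tau>) \<in> gradient W)"

definition equivalent_ms :: "'a set set list \<Rightarrow> 'a set set list \<Rightarrow> bool" where
  "equivalent_ms W W' \<longleftrightarrow> gradient W = gradient W'"

text \<open>Boundary and coboundary (Z_2 chains are sets of simplices).\<close>
definition bd :: "'a set set \<Rightarrow> 'a set \<Rightarrow> 'a set set" where
  "bd K \<sigma> = {\<tau>\<in>K. \<tau> \<subseteq> \<sigma> \<and> card \<tau> + 1 = card \<sigma>}"

definition cobd :: "'a set set \<Rightarrow> 'a set \<Rightarrow> 'a set set" where
  "cobd K \<sigma> = {\<tau>\<in>K. \<sigma> \<subseteq> \<tau> \<and> card \<tau> = card \<sigma> + 1}"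

text \<open>Linear (mod 2) extension of a map on simplices to finite chains:
  symmetric difference of the images.\<close>
definition chain_ext :: "('a set \<Rightarrow> 'a set set) \<Rightarrow> 'a set set \<Rightarrow> 'a set set" where
  "chain_ext f c = {\<nu>. odd (card {\<sigma>\<in>c. \<nu> \<in> f \<sigma>})}"

text \<open>Characterising properties; maps are normalised to be empty off K.\<close>
definition is_reference_map :: "'a set set \<Rightarrow> 'a set set list \<Rightarrow> ('a set \<Rightarrow> 'a set set) \<Rightarrow> bool" where
  "is_reference_map K W f \<longleftrightarrow>
     (\<forall>\<sigma>. \<sigma> \<notin> K \<longrightarrow> f \<sigma> = {}) \<and>
     (\<forall>\<sigma>\<in>K. f \<sigma> \<subseteq> {\<nu>\<in>critical W. card \<nu> = card \<sigma>}) \<and>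
     (\<forall>\<nu>\<in>critical W. f \<nu> = {\<nu>}) \<and>
     (\<forall>\<tau>\<in>K. upper_regular W \<tau> \<longrightarrow> f \<tau> = {} \<and> chain_ext f (bd K \<tau>) = {})"

definition is_coreference_map :: "'a set set \<Rightarrow> 'a set set list \<Rightarrow> ('a set \<Rightarrow> 'a set set) \<Rightarrow> bool" where
  "is_coreference_map K W f \<longleftrightarrow>
     (\<forall>\<sigma>. \<sigma> \<notin> K \<longrightarrow> f \<sigma> = {}) \<and>
     (\<forall>\<sigma>\<in>K. f \<sigma> \<subseteq> {\<nu>\<in>critical W. card \<nu> = card \<sigma>}) \<and>
     (\<forall>\<nu>\<in>critical W. f \<nu> = {\<nu>}) \<and>
     (\<forall>\<sigma>\<in>K. lower_regular W \<sigma> \<longrightarrow> f \<sigma> = {} \<and> chain_ext f (cobd K \<sigma>) = {})"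

definition reference_map :: "'a set set \<Rightarrow> 'a set set list \<Rightarrow> 'a set \<Rightarrow> 'a set set" where
  "reference_map K W = (THE f. is_reference_map K W f)"

definition coreference_map :: "'a set set \<Rightarrow> 'a set set list \<Rightarrow> 'a set \<Rightarrow> 'a set set" where
  "coreference_map K W = (THE f. is_coreference_map K W f)"

end

theory Submission
  imports Defs
begin

lemma ms_step:
  assumes "morse_seq K W" "Suc i < length W"
  shows "W ! i \<subseteq> W ! Suc i"
  using assms unfolding morse_seq_def expansion_by_def filling_by_def by blast

lemma ms_mono:
  assumes "morse_seq K W" "i \<le> j" "j < length W"
  shows "W ! i \<subseteq> W ! j"
  using assms(2,3)
proof (induction j)
  case 0 then show ?case by simp
next
  case (Suc j)
  show ?case
  proof (cases "i = Suc j")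
    case True then show ?thesis by simp
  next
    case False
    then have "W ! i \<subseteq> W ! j" using Suc by simp
    also have "\<dots> \<subseteq> W ! Suc j" using ms_step[OF assms(1)] Suc.prems by simp
    finally show ?thesis .
  qed
qed

lemma ms_sub_K:
  assumes "morse_seq K W" "j < length W"
  shows "W ! j \<subseteq> K"
proof -
  have ne: "W \<noteq> []" and l: "last W = K" using assms unfolding morse_seq_def by auto
  have "W ! (length W - 1) = K" using last_conv_nth[OF ne] l by simp
  then show ?thesis using ms_mono[OF assms(1), of j "length W - 1"] assms by auto
qed

lemma ms_unique:
  assumes "morse_seq K W" "Suc i < length W" "Suc j < length W"
    "x \<in> W ! Suc i" "x \<notin> W ! i" "x \<in> W ! Suc j" "x \<notin> W ! j"
  shows "i = j"
proof (rule ccontr)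
  assume "i \<noteq> j"
  then have "Suc i \<le> j \<or> Suc j \<le> i" by auto
  then show False
    using ms_mono[OF assms(1), of "Suc i" j] ms_mono[OF assms(1), of "Suc j" i] assms by auto
qed

lemma ms_cover:
  assumes "morse_seq K W" "k < length W"
  shows "W ! k \<subseteq> critical W \<union> fst ` gradient W \<union> snd ` gradient W"
  using assms(2)
proof (induction k)
  case 0
  have ne: "W \<noteq> []" and l: "hd W = {}" using assms(1) unfolding morse_seq_def by auto
  then show ?case using hd_conv_nth[OF ne] by simp
next
  case (Suc k)
  then have IH: "W ! k \<subseteq> critical W \<union> fst ` gradient W \<union> snd ` gradient W" by simp
  from assms(1) Suc.prems have
    "(\<exists>\<sigma> \<tau>. expansion_by (W ! k) (W ! Suc k) \<sigma> \<tau>) \<or> (\<exists>\<nu>. filling_by (W ! k) (W ! Suc k) \<nu>)"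
    unfolding morse_seq_def by blast
  then show ?case
  proof
    assume "\<exists>\<sigma> \<tau>. expansion_by (W ! k) (W ! Suc k) \<sigma> \<tau>"
    then obtain \<sigma> \<tau> where e: "expansion_by (W ! k) (W ! Suc k) \<sigma> \<tau>" by blast
    then have g: "(\<sigma>, \<tau>) \<in> gradient W" using Suc.prems unfolding gradient_def by blast
    have "W ! Suc k \<subseteq> W ! k \<union> {\<sigma>, \<tau>}" using e unfolding expansion_by_def by blast
    then show ?thesis using IH g by force
  next
    assume "\<exists>\<nu>. filling_by (W ! k) (W ! Suc k) \<nu>"
    then obtain \<nu> where e: "filling_by (W ! k) (W ! Suc k) \<nu>" by blast
    then have g: "\<nu> \<in> critical W" using Suc.prems unfolding critical_def by blast
    have "W ! Suc k \<subseteq> W ! k \<union> {\<nu>}" using e unfolding filling_by_def by blast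
    then show ?thesis using IH g by force
  qed
qed

lemma ms_critical:
  assumes "morse_seq K W"
  shows "critical W = K - (fst ` gradient W \<union> snd ` gradient W)"
proof
  have ne: "W \<noteq> []" and l: "last W = K" using assms unfolding morse_seq_def by auto
  have lastK: "W ! (length W - 1) = K" using last_conv_nth[OF ne] l by simp
  show "K - (fst ` gradient W \<union> snd ` gradient W) \<subseteq> critical W"
    using ms_cover[OF assms, of "length W - 1"] lastK ne by auto
  show "critical W \<subseteq> K - (fst ` gradient W \<union> snd ` gradient W)"
  proof
    fix \<nu> assume "\<nu> \<in> critical W"
    then obtain i where i: "Suc i < length W" "filling_by (W ! i) (W ! Suc i) \<nu>"
      unfolding critical_def by blast
    have nuK: "\<nu> \<in> K" using i ms_sub_K[OF assms, of "Suc i"] unfolding filling_by_def facet_def by blast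
    have ni: "\<nu> \<in> W ! Suc i" "\<nu> \<notin> W ! i" using i unfolding filling_by_def facet_def by auto
    have "\<nu> \<notin> fst ` gradient W \<union> snd ` gradient W"
    proof
      assume "\<nu> \<in> fst ` gradient W \<union> snd ` gradient W"
      then obtain \<sigma> \<tau> where st: "(\<sigma>, \<tau>) \<in> gradient W" "\<nu> = \<sigma> \<or> \<nu> = \<tau>" by force
      then obtain j where j: "Suc j < length W" "expansion_by (W ! j) (W ! Suc j) \<sigma> \<tau>"
        unfolding gradient_def by blast
      have nj: "\<nu> \<in> W ! Suc j" "\<nu> \<notin> W ! j" using j st(2)
        unfolding expansion_by_def free_pair_def by auto
      have "i = j" using ms_unique[OF assms i(1) j(1) ni nj] .
      then have "W ! Suc i - {\<nu>} = W ! Suc i - {\<sigma>, \<tau>}" "\<sigma> \<in> W ! Suc i" "\<tau> \<in> W ! Suc i" "\<sigma> \<noteq> \<tau>"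
        using i j unfolding filling_by_def expansion_by_def free_pair_def by auto
      then show False by blast
    qed
    then show "\<nu> \<in> K - (fst ` gradient W \<union> snd ` gradient W)" using nuK by blast
  qed
qed

theorem proposition3:
  fixes K :: "'a set set" and W W' :: "'a set set list"
  assumes "morse_seq K W" and "morse_seq K W'" and "equivalent_ms W W'"
  shows "reference_map K W = reference_map K W' \<and>
         coreference_map K W = coreference_map K W'"
proof -
  have g: "gradient W = gradient W'" using assms(3) unfolding equivalent_ms_def .
  have c: "critical W = critical W'" using ms_critical[OF assms(1)] ms_critical[OF assms(2)] g by simp
  have u: "upper_regular W = upper_regular W'" "lower_regular W = lower_regular W'"
    using g unfolding upper_regular_def lower_regular_def by auto
  have "is_reference_map K W = is_reference_map K W'"
    "is_coreference_map K W = is_coreference_map K W'"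
    unfolding is_reference_map_def is_coreference_map_def c u by (rule refl)+
  then show ?thesis unfolding reference_map_def coreference_map_def by simp
qed

end
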